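(* Assume the setting and hypotheses of the time-triggered learning rule with integer parameter $a\ge2$, and conditions (i) $\mathcal{S}(\theta_p,\theta_q)\ne\emptyset$ for all distinct $\theta_p,\theta_q\in\Theta$, (ii) $\mathcal{G}$ strongly connected, (iii) $\pi_{i,0}(\theta)>0,\mu_{i,0}(\theta)>0$ for all $i,\theta$. Then there exists a set $\bar\Omega\subseteq\Omega$ with $\mathbb{P}^{\theta^\star}(\bar\Omega)=1$ such that for each $\omega\in\bar\Omega$ there exist constants $\eta(\omega)\in(0,1)$ and $t'(\omega)\in(0,\infty)$ with $$\pi_{i,t}(\theta^\star)\ge\eta(\omega)\quad\text{and}\quad\mu_{i,t}(\theta^\star)\ge\eta(\omega)\qquad\forall t\ge t'(\omega),\ \forall i\in\mathcal{V}.$$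
   Context: Agents $\mathcal{V}=\{1,\dots,n\}$ interact over a directed graph $\mathcal{G}=(\mathcal{V},\mathcal{E})$; $(j,i)\in\mathcal{E}$ means $j$ can send to $i$, and $\mathcal{N}_i=\{j:(j,i)\in\mathcal{E}\}$. $\Theta=\{\theta_1,\dots,\theta_m\}$ finite hypotheses, $\theta^\star$ the fixed true state. Agent $i$ has finite signal space $\mathcal{S}_i$ and known marginals $l_i(\cdot|\theta)$ of joint likelihoods $l(\cdot|\theta)$ on $\mathcal{S}=\prod_i\mathcal{S}_i$, with $l_i(w_i|\theta)>0$ for all $w_i,\theta$. Profiles $s_t$ ($t\in\mathbb{N}_+$) are i.i.d. over time with law $l(\cdot|\theta^\star)$; $\Omega$ is the set of sequences $(s_1,s_2,\dots)$ with product measure $\mathbb{P}^{\theta^\star}$. $K_i(\theta_p,\theta_q)=D(l_i(\cdot|\theta_p)\|l_i(\cdot|\theta_q))$; $\mathcal{S}(\theta_p,\theta_q)=\{i:K_i(\theta_p,\theta_q)>0\}$. Rule with parameter $a\in\mathbb{N}_+$: $\mathbb{I}=\{t_k\}_{k\in\mathbb{N}_+}$, $t_1=1$, $t_{k+1}-t_k=a^k$. For all $t\in\mathbb{N}$: $\pi_{i,t+1}(\theta)=\dfrac{l_i(s_{i,t+1}|\theta)\pi_{i,t}(\theta)}{\sum_p l_i(s_{i,t+1}|\theta_p)\pi_{i,t}(\theta_p)}$; if $t+1\in\mathbb{I}$, $\mu_{i,t+1}(\theta)=\dfrac{\min\{\{\mu_{j,t}(\theta)\}_{j\in\mathcal{N}_i},\pi_{i,t+1}(\theta)\}}{\sum_p\min\{\{\mu_{j,t}(\theta_p)\}_{j\in\mathcal{N}_i},\pi_{i,t+1}(\theta_p)\}}$;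 otherwise $\mu_{i,t+1}(\theta)=\mu_{i,t}(\theta)$. *)

theory Defs
  imports "HOL-Probability.Probability"
begin

text \<open>Agents have type 'v (finite), hypotheses type 'h (finite), a signal profile is a
  function 'v \<Rightarrow> 's.  The joint likelihood of a profile under hypothesis \<theta> is the pmf L \<theta>.
  A sample path \<omega> :: nat \<Rightarrow> ('v \<Rightarrow> 's) lists the profiles (s_1, s_2, ...),
  i.e. s_t = \<omega> (t - 1).\<close>

definition marg :: "('h \<Rightarrow> ('v \<Rightarrow> 's) pmf) \<Rightarrow> 'v \<Rightarrow> 'h \<Rightarrow> 's \<Rightarrow> real" where
  "marg L i \<theta> w = pmf (map_pmf (\<lambda>s. s i) (L \<theta>)) w"

definition KLi :: "('v \<Rightarrow> 's set) \<Rightarrow> ('h \<Rightarrow> ('v \<Rightarrow> 's) pmf) \<Rightarrow> 'v \<Rightarrow> 'h \<Rightarrow> 'h \<Rightarrow> real" where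
  "KLi Sig L i p q = (\<Sum>w\<in>Sig i. marg L i p w * ln (marg L i p w / marg L i q w))"

text \<open>Trigger times: trig a 0 = t_1 = 1, trig a k = t_{k+1}, t_{k+1} - t_k = a^k.\<close>
fun trig :: "nat \<Rightarrow> nat \<Rightarrow> nat" where
  "trig a 0 = 1"
| "trig a (Suc k) = trig a k + a ^ (Suc k)"

definition trigset :: "nat \<Rightarrow> nat set" where
  "trigset a = range (trig a)"

fun pib :: "('h \<Rightarrow> ('v \<Rightarrow> 's) pmf) \<Rightarrow> ('v \<Rightarrow> 'h \<Rightarrow> real) \<Rightarrow> (nat \<Rightarrow> 'v \<Rightarrow> 's)
            \<Rightarrow> nat \<Rightarrow> 'v \<Rightarrow> 'h::finite \<Rightarrow> real" where
  "pib L pi0 \<omega> 0 i \<theta> = pi0 i \<theta>"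
| "pib L pi0 \<omega> (Suc t) i \<theta> =
     marg L i \<theta> (\<omega> t i) * pib L pi0 \<omega> t i \<theta> /
     (\<Sum>p\<in>UNIV. marg L i p (\<omega> t i) * pib L pi0 \<omega> t i p)"

fun mub :: "nat \<Rightarrow> ('v \<times> 'v) set \<Rightarrow> ('h \<Rightarrow> ('v \<Rightarrow> 's) pmf) \<Rightarrow> ('v \<Rightarrow> 'h \<Rightarrow> real)
            \<Rightarrow> ('v \<Rightarrow> 'h \<Rightarrow> real) \<Rightarrow> (nat \<Rightarrow> 'v \<Rightarrow> 's) \<Rightarrow> nat \<Rightarrow> 'v \<Rightarrow> 'h::finite \<Rightarrow> real" where
  "mub a E L pi0 mu0 \<omega> 0 i \<theta> = mu0 i \<theta>"
| "mub a E L pi0 mu0 \<omega> (Suc t) i \<theta> =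
     (if Suc t \<in> trigset a then
        Min (insert (pib L pi0 \<omega> (Suc t) i \<theta>) ((\<lambda>j. mub a E L pi0 mu0 \<omega> t j \<theta>) ` {j. (j, i) \<in> E})) /
        (\<Sum>p\<in>UNIV. Min (insert (pib L pi0 \<omega> (Suc t) i p) ((\<lambda>j. mub a E L pi0 mu0 \<omega> t j p) ` {j. (j, i) \<in> E})))
      else mub a E L pi0 mu0 \<omega> t i \<theta>)"

definition pathM :: "('h \<Rightarrow> ('v \<Rightarrow> 's) pmf) \<Rightarrow> 'h \<Rightarrow> (nat \<Rightarrow> 'v \<Rightarrow> 's) measure" where
  "pathM L \<theta>s = Pi\<^sub>M UNIV (\<lambda>_::nat. measure_pmf (L \<theta>s))"

end

theory Submission
  imports Defs
begin


lemma coord_indep: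
  fixes p :: "'x pmf"
  shows "prob_space.indep_vars (PiM (UNIV::nat set) (\<lambda>_. measure_pmf p)) (\<lambda>_. measure_pmf p) (\<lambda>i \<omega>. \<omega> i) UNIV"
proof -
  interpret product_prob_space "\<lambda>_. measure_pmf p" "UNIV::nat set"
    by (intro product_prob_spaceI) (simp add: measure_pmf.prob_space_axioms)
  have *: "(\<lambda>x. \<lambda>i\<in>(UNIV::nat set). x i) = (\<lambda>x. x)"
    by (simp add: restrict_UNIV)
  have **: "(\<Pi>\<^sub>M i\<in>(UNIV::nat set). distr (PiM UNIV (\<lambda>_. measure_pmf p)) (measure_pmf p) (\<lambda>\<omega>. \<omega> i))
      = PiM UNIV (\<lambda>_. measure_pmf p)"
    by (intro PiM_cong refl) (simp add: PiM_component)
  show ?thesis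
    by (subst P.indep_vars_iff_distr_eq_PiM) (auto simp: * ** measurable_component_singleton)
qed



lemma sum_bounded_below:
  fixes p :: "'x pmf" and f :: "'x \<Rightarrow> real"
  assumes bnd: "\<And>x. x \<in> set_pmf p \<Longrightarrow> \<bar>f x\<bar> \<le> B"
    and pos: "measure_pmf.expectation p f > 0"
  shows "AE \<omega> in PiM (UNIV::nat set) (\<lambda>_. measure_pmf p). \<exists>C. \<forall>t. C \<le> (\<Sum>s<t. f (\<omega> s))"
proof -
  let ?M0 = "measure_pmf p"
  let ?PM = "PiM (UNIV::nat set) (\<lambda>_. ?M0)"
  interpret product_prob_space "\<lambda>_. measure_pmf p" "UNIV::nat set"
    by (intro product_prob_spaceI) (simp add: measure_pmf.prob_space_axioms)
  define \<mu> where "\<mu> = measure_pmf.expectation p f"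
  define b where "b = \<bar>B\<bar> + 1"
  define a where "a = - b"
  have ab: "a < b" unfolding a_def b_def by simp
  have fm[measurable]: "f \<in> borel_measurable ?M0" by simp
  have comp_m[measurable]: "(\<lambda>\<omega>. \<omega> i) \<in> measurable ?PM ?M0" for i
    by (rule measurable_component_singleton) simp
  have distr_eq: "distr ?PM borel (\<lambda>\<omega>. f (\<omega> i)) = distr ?M0 borel f" for i
  proof -
    have "distr ?PM borel (\<lambda>\<omega>. f (\<omega> i)) = distr (distr ?PM ?M0 (\<lambda>\<omega>. \<omega> i)) borel f"
      by (subst distr_distr) (auto simp: comp_def)
    also have "\<dots> = distr ?M0 borel f" by (simp add: PiM_component)
    finally show ?thesis .
  qed
  have expY: "P.expectation (\<lambda>\<omega>. f (\<omega> 0)) = \<mu>"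
  proof -
    have "P.expectation (\<lambda>\<omega>. f (\<omega> 0)) = integral\<^sup>L (distr ?PM ?M0 (\<lambda>\<omega>. \<omega> 0)) f"
      by (subst integral_distr) auto
    then show ?thesis by (simp add: PiM_component \<mu>_def)
  qed
  have indep: "P.indep_vars (\<lambda>_. borel) (\<lambda>i \<omega>. f (\<omega> i)) {..<n}" for n
    by (rule P.indep_vars_subset[OF P.indep_vars_compose2[OF coord_indep[of p]]]) auto
  have AEY: "AE x in ?PM. f (x 0) \<in> {a..b}"
  proof (rule AE_component)
    show "AE x in ?M0. f x \<in> {a..b}"
      using AE_measure_pmf[of p] proof eventually_elim
      case (elim x)
      then have "\<bar>f x\<bar> \<le> B" by (rule bnd)
      then show ?case by (auto simp: a_def b_def)
    qed
  qed simp
  define c where "c = \<mu>\<^sup>2 / (2 * (b - a)\<^sup>2)"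
  have cpos: "c > 0" using pos ab unfolding c_def \<mu>_def by auto
  define A where "A n = {x \<in> space ?PM. (\<Sum>i\<in>{..<n}. f (x i)) \<le> real n * \<mu> - real n * \<mu> / 2}" for n
  have A_m[measurable]: "A n \<in> sets ?PM" for n unfolding A_def by measurable
  have Ab: "measure ?PM (A n) \<le> exp (- c * real n)" for n
  proof (cases "n = 0")
    case True then show ?thesis by simp
  next
    case False
    interpret H: Hoeffding_ineq_iid ?PM "{..<n}" "\<lambda>i \<omega>. f (\<omega> i)" "\<lambda>\<omega>. f (\<omega> 0)" a b "P.expectation (\<lambda>\<omega>. f (\<omega> 0))"
    proof unfold_locales
      show "P.indep_vars (\<lambda>_. borel) (\<lambda>i \<omega>. f (\<omega> i)) {..<n}" by (rule indep)
      show "distr ?PM borel (\<lambda>\<omega>. f (\<omega> i)) = distr ?PM borel (\<lambda>\<omega>. f (\<omega> 0))" for i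
        by (simp add: distr_eq)
      show "AE x in ?PM. f (x 0) \<in> {a..b}" by (rule AEY)
    qed (auto)
    have e: "real n * \<mu> / 2 \<ge> 0" using pos by (simp add: \<mu>_def)
    have "measure ?PM (A n) \<le> exp (- 2 * (real n * \<mu> / 2)\<^sup>2 / (real n * (b - a)\<^sup>2))"
      using H.Hoeffding_ineq_le[OF e ab] False unfolding A_def expY by (simp add: lessThan_empty_iff)
    also have "- 2 * (real n * \<mu> / 2)\<^sup>2 / (real n * (b - a)\<^sup>2) = - c * real n"
    proof -
      define d where "d = (b - a)\<^sup>2"
      have d: "d > 0" using ab unfolding d_def by simp
      have nn: "real n > 0" using False by simp
      show ?thesis unfolding c_def d_def[symmetric] using d nn
        by (simp add: power2_eq_square field_simps)
    qed
    finally show ?thesis .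
  qed
  have summ: "summable (\<lambda>n. measure ?PM (A n))"
  proof (rule summable_comparison_test)
    show "summable (\<lambda>n. exp (- c) ^ n)" using cpos by (intro summable_geometric) simp
    show "\<exists>N. \<forall>n\<ge>N. norm (measure ?PM (A n)) \<le> exp (- c) ^ n"
      using Ab by (auto simp: exp_of_nat_mult[symmetric] mult.commute)
  qed
  have "AE x in ?PM. eventually (\<lambda>n. x \<in> space ?PM - A n) sequentially"
    by (rule borel_cantelli_AE1) (auto simp: summ P.emeasure_eq_measure)
  then show ?thesis
  proof eventually_elim
    case (elim x)
    then obtain N where N: "\<And>n. n \<ge> N \<Longrightarrow> x \<notin> A n" and sp: "x \<in> space ?PM"
      by (auto simp: eventually_sequentially)
    have ge0: "0 \<le> (\<Sum>s<t. f (x s))" if "t \<ge> N" for t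
    proof -
      have "\<not> (\<Sum>i\<in>{..<t}. f (x i)) \<le> real t * \<mu> - real t * \<mu> / 2"
        using N[OF that] sp unfolding A_def by auto
      moreover have "real t * \<mu> \<ge> 0" using pos by (simp add: \<mu>_def)
      ultimately show ?thesis by linarith
    qed
    define C where "C = Min (insert 0 ((\<lambda>t. \<Sum>s<t. f (x s)) ` {..<N}))"
    have "C \<le> (\<Sum>s<t. f (x s))" for t
    proof (cases "t < N")
      case True then show ?thesis unfolding C_def by (intro Min_le) auto
    next
      case False
      have "C \<le> 0" unfolding C_def by (intro Min_le) auto
      with ge0[of t] False show ?thesis by linarith
    qed
    then show ?case by blast
  qed
qed



lemma pib_rep:
  fixes L :: "'h::finite \<Rightarrow> ('v \<Rightarrow> 's) pmf"
  assumes mpos: "\<And>t \<theta>. marg L i \<theta> (\<omega> t i) > 0"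
    and p0: "\<And>\<theta>. pi0 i \<theta> > 0"
  shows "\<exists>c>0. \<forall>\<theta>. pib L pi0 \<omega> t i \<theta> = c * pi0 i \<theta> * (\<Prod>s<t. marg L i \<theta> (\<omega> s i))"
proof (induction t)
  case 0 then show ?case by (intro exI[of _ 1]) simp
next
  case (Suc t)
  then obtain c where c: "c > 0" "\<And>\<theta>. pib L pi0 \<omega> t i \<theta> = c * pi0 i \<theta> * (\<Prod>s<t. marg L i \<theta> (\<omega> s i))"
    by blast
  define D where "D = (\<Sum>p\<in>UNIV. marg L i p (\<omega> t i) * pib L pi0 \<omega> t i p)"
  have "D > 0" unfolding D_def c(2)
    by (intro sum_pos) (auto intro!: mult_pos_pos prod_pos c mpos p0)
  show ?case
  proof (intro exI[of _ "c / D"] conjI allI)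
    show "c / D > 0" using c \<open>D > 0\<close> by simp
    fix \<theta>
    show "pib L pi0 \<omega> (Suc t) i \<theta> = c / D * pi0 i \<theta> * (\<Prod>s<Suc t. marg L i \<theta> (\<omega> s i))"
    proof -
      have "pib L pi0 \<omega> (Suc t) i \<theta> = marg L i \<theta> (\<omega> t i) * pib L pi0 \<omega> t i \<theta> / D"
        by (simp add: D_def)
      also have "\<dots> = c / D * pi0 i \<theta> * (\<Prod>s<Suc t. marg L i \<theta> (\<omega> s i))"
        using \<open>D > 0\<close> by (simp add: c(2) field_simps)
      finally show ?thesis .
    qed
  qed
qed

lemma pib_pos:
  fixes L :: "'h::finite \<Rightarrow> ('v \<Rightarrow> 's) pmf"
  assumes mpos: "\<And>t \<theta>. marg L i \<theta> (\<omega> t i) > 0"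
    and p0: "\<And>\<theta>. pi0 i \<theta> > 0"
  shows "pib L pi0 \<omega> t i \<theta> > 0"
proof -
  obtain c where c: "c > 0" "\<And>\<theta>. pib L pi0 \<omega> t i \<theta> = c * pi0 i \<theta> * (\<Prod>s<t. marg L i \<theta> (\<omega> s i))"
    using pib_rep[of L i \<omega> pi0 t, OF mpos p0] by blast
  show ?thesis unfolding c(2) by (auto intro!: mult_pos_pos prod_pos c mpos p0)
qed

lemma pib_sum:
  fixes L :: "'h::finite \<Rightarrow> ('v \<Rightarrow> 's) pmf"
  assumes mpos: "\<And>t \<theta>. marg L i \<theta> (\<omega> t i) > 0"
    and p0: "\<And>\<theta>. pi0 i \<theta> > 0"
    and s0: "(\<Sum>\<theta>\<in>UNIV. pi0 i \<theta>) = 1"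
  shows "(\<Sum>\<theta>\<in>UNIV. pib L pi0 \<omega> t i \<theta>) = 1"
proof (cases t)
  case 0 then show ?thesis using s0 by simp
next
  case (Suc t')
  define D where "D = (\<Sum>p\<in>UNIV. marg L i p (\<omega> t' i) * pib L pi0 \<omega> t' i p)"
  have "D > 0" unfolding D_def
    by (intro sum_pos) (auto intro!: mult_pos_pos mpos pib_pos p0)
  then show ?thesis unfolding Suc
    by (simp add: D_def[symmetric] sum_divide_distrib[symmetric])
qed

lemma pib_lower:
  fixes L :: "'h::finite \<Rightarrow> ('v \<Rightarrow> 's) pmf"
  assumes mpos: "\<And>t \<theta>. marg L i \<theta> (\<omega> t i) > 0"
    and p0: "\<And>\<theta>. pi0 i \<theta> > 0"
    and s0: "(\<Sum>\<theta>\<in>UNIV. pi0 i \<theta>) = 1"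
    and Cex: "\<And>\<theta>. \<exists>C. \<forall>t. C \<le> (\<Sum>s<t. ln (marg L i \<theta>s (\<omega> s i) / marg L i \<theta> (\<omega> s i)))"
  shows "\<exists>e>0. \<forall>t. e \<le> pib L pi0 \<omega> t i \<theta>s"
proof -
  obtain Cf where Cf: "\<And>\<theta> t. Cf \<theta> \<le> (\<Sum>s<t. ln (marg L i \<theta>s (\<omega> s i) / marg L i \<theta> (\<omega> s i)))"
    using Cex by metis
  define B where "B = (\<Sum>\<theta>\<in>UNIV. pi0 i \<theta> / pi0 i \<theta>s * exp (- Cf \<theta>))"
  have Bpos: "B > 0" unfolding B_def by (intro sum_pos) (auto intro!: divide_pos_pos mult_pos_pos p0)
  show ?thesis
  proof (intro exI[of _ "1 / B"] conjI allI)
    show "1 / B > 0" using Bpos by simp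
    fix t
    obtain c where c: "c > 0" "\<And>\<theta>. pib L pi0 \<omega> t i \<theta> = c * pi0 i \<theta> * (\<Prod>s<t. marg L i \<theta> (\<omega> s i))"
      using pib_rep[of L i \<omega> pi0 t, OF mpos p0] by blast
    define P where "P \<theta> = (\<Prod>s<t. marg L i \<theta> (\<omega> s i))" for \<theta>
    have Ppos: "P \<theta> > 0" for \<theta> unfolding P_def by (auto intro!: prod_pos mpos)
    have key: "P \<theta> \<le> P \<theta>s * exp (- Cf \<theta>)" for \<theta>
    proof -
      have "(\<Prod>s<t. marg L i \<theta>s (\<omega> s i) / marg L i \<theta> (\<omega> s i))
          = exp (\<Sum>s<t. ln (marg L i \<theta>s (\<omega> s i) / marg L i \<theta> (\<omega> s i)))"
        by (simp add: exp_sum mpos)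
      also have "\<dots> \<ge> exp (Cf \<theta>)" using Cf by simp
      finally have "P \<theta>s / P \<theta> \<ge> exp (Cf \<theta>)" unfolding P_def by (simp add: prod_dividef)
      then have "P \<theta>s \<ge> exp (Cf \<theta>) * P \<theta>" using Ppos[of \<theta>] by (simp add: field_simps)
      then show ?thesis by (simp add: exp_minus field_simps)
    qed
    have each: "pib L pi0 \<omega> t i \<theta> \<le> pib L pi0 \<omega> t i \<theta>s * (pi0 i \<theta> / pi0 i \<theta>s * exp (- Cf \<theta>))" for \<theta>
    proof -
      have "pib L pi0 \<omega> t i \<theta> = c * pi0 i \<theta> * P \<theta>" using c(2) P_def by simp
      also have "\<dots> \<le> c * pi0 i \<theta> * (P \<theta>s * exp (- Cf \<theta>))"
        using key[of \<theta>] c(1) p0[of \<theta>] by (intro mult_left_mono) auto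
      also have "\<dots> = (c * pi0 i \<theta>s * P \<theta>s) * (pi0 i \<theta> / pi0 i \<theta>s * exp (- Cf \<theta>))"
        using p0[of \<theta>s] by (simp add: field_simps)
      also have "\<dots> = pib L pi0 \<omega> t i \<theta>s * (pi0 i \<theta> / pi0 i \<theta>s * exp (- Cf \<theta>))"
        using c(2) P_def by simp
      finally show ?thesis .
    qed
    have "1 = (\<Sum>\<theta>\<in>UNIV. pib L pi0 \<omega> t i \<theta>)" using pib_sum[of L i \<omega> pi0 t, OF mpos p0 s0] by simp
    also have "\<dots> \<le> (\<Sum>\<theta>\<in>UNIV. pib L pi0 \<omega> t i \<theta>s * (pi0 i \<theta> / pi0 i \<theta>s * exp (- Cf \<theta>)))"
      by (intro sum_mono each)
    also have "\<dots> = pib L pi0 \<omega> t i \<theta>s * B" unfolding B_def by (simp add: sum_distrib_left)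
    finally show "1 / B \<le> pib L pi0 \<omega> t i \<theta>s" using Bpos by (simp add: field_simps)
  qed
qed

lemma div_ge_self_aux: "(0::real) < x \<Longrightarrow> 0 < D \<Longrightarrow> D \<le> 1 \<Longrightarrow> x \<le> x / D"
  by (simp add: le_divide_eq mult_left_le)

lemma mub_lower:
  fixes L :: "'h::finite \<Rightarrow> ('v::finite \<Rightarrow> 's) pmf"
  assumes ppos: "\<And>t i \<theta>. pib L pi0 \<omega> t i \<theta> > 0"
    and psum: "\<And>t i. (\<Sum>\<theta>\<in>UNIV. pib L pi0 \<omega> t i \<theta>) = 1"
    and plow: "\<And>t i. e \<le> pib L pi0 \<omega> t i \<theta>s"
    and m0: "\<And>i \<theta>. mu0 i \<theta> > 0"
    and m0low: "\<And>i. e \<le> mu0 i \<theta>s"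
  shows "(\<forall>i \<theta>. mub a E L pi0 mu0 \<omega> t i \<theta> > 0) \<and> (\<forall>i. e \<le> mub a E L pi0 mu0 \<omega> t i \<theta>s)"
proof (induction t)
  case 0 then show ?case using m0 m0low by simp
next
  case (Suc t)
  let ?N = "\<lambda>i p. Min (insert (pib L pi0 \<omega> (Suc t) i p) ((\<lambda>j. mub a E L pi0 mu0 \<omega> t j p) ` {j. (j, i) \<in> E}))"
  have Npos: "?N i p > 0" for i p
    using Suc.IH ppos by (subst Min_gr_iff) (auto simp del: pib.simps)
  have Nle: "?N i p \<le> pib L pi0 \<omega> (Suc t) i p" for i p by (intro Min_le) auto
  have Nlow: "e \<le> ?N i \<theta>s" for i
    using Suc.IH plow by (subst Min_ge_iff) (auto simp del: pib.simps)
  have Dpos: "(\<Sum>p\<in>UNIV. ?N i p) > 0" for i by (intro sum_pos Npos) auto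
  have Dle: "(\<Sum>p\<in>UNIV. ?N i p) \<le> 1" for i
  proof -
    have "(\<Sum>p\<in>UNIV. ?N i p) \<le> (\<Sum>p\<in>UNIV. pib L pi0 \<omega> (Suc t) i p)" by (intro sum_mono Nle)
    then show ?thesis using psum by (simp del: pib.simps)
  qed
  have eq: "mub a E L pi0 mu0 \<omega> (Suc t) i \<theta> = (if Suc t \<in> trigset a then ?N i \<theta> / (\<Sum>p\<in>UNIV. ?N i p) else mub a E L pi0 mu0 \<omega> t i \<theta>)" for i \<theta>
    by (simp only: mub.simps)
  have pos: "mub a E L pi0 mu0 \<omega> (Suc t) i \<theta> > 0" for i \<theta>
    unfolding eq using Suc.IH Npos[of i \<theta>] Dpos[of i] by (simp del: pib.simps)
  have low: "e \<le> mub a E L pi0 mu0 \<omega> (Suc t) i \<theta>s" for i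
  proof (cases "Suc t \<in> trigset a")
    case True
    have "e \<le> ?N i \<theta>s" by (rule Nlow)
    also have "?N i \<theta>s \<le> ?N i \<theta>s / (\<Sum>p\<in>UNIV. ?N i p)"
      by (rule div_ge_self_aux[OF Npos[of i \<theta>s] Dpos[of i] Dle[of i]])
    finally show ?thesis using True unfolding eq by (simp del: pib.simps)
  next
    case False then show ?thesis using Suc.IH unfolding eq by (simp del: pib.simps)
  qed
  show ?case using pos low by blast
qed



lemma ln_less_minus_one: assumes "0 < (x::real)" "x \<noteq> 1" shows "ln x < x - 1"
proof -
  define y where "y = sqrt x"
  have y1: "y > 0" "y \<noteq> 1" using assms unfolding y_def by auto
  have y3: "x = y * y" using assms unfolding y_def by simp
  note y = y1 y3
  have "ln x = 2 * ln y" using y by (simp add: ln_mult)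
  also have "\<dots> \<le> 2 * (y - 1)" using ln_le_minus_one[OF y(1)] by simp
  also have "\<dots> < x - 1"
  proof -
    have "(y - 1)^2 > 0" using y by simp
    then show ?thesis using y(3) by (simp add: power2_eq_square algebra_simps)
  qed
  finally show ?thesis .
qed

lemma gibbs_strict:
  fixes p q :: "'w \<Rightarrow> real"
  assumes fin: "finite S" and pp: "\<And>w. w \<in> S \<Longrightarrow> p w > 0" and qp: "\<And>w. w \<in> S \<Longrightarrow> q w > 0"
    and ps: "(\<Sum>w\<in>S. p w) = 1" and qs: "(\<Sum>w\<in>S. q w) = 1"
    and ne: "w0 \<in> S" "p w0 \<noteq> q w0"
  shows "(\<Sum>w\<in>S. p w * ln (p w / q w)) > 0"
proof -
  have term_le: "p w * ln (q w / p w) \<le> q w - p w" if "w \<in> S" for w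
  proof -
    have "ln (q w / p w) \<le> q w / p w - 1" using pp[OF that] qp[OF that] by (intro ln_le_minus_one) simp
    then have "p w * ln (q w / p w) \<le> p w * (q w / p w - 1)" using pp[OF that] by (intro mult_left_mono) auto
    also have "\<dots> = q w - p w" using pp[OF that] by (simp add: field_simps)
    finally show ?thesis .
  qed
  have term_lt: "p w0 * ln (q w0 / p w0) < q w0 - p w0"
  proof -
    have "q w0 / p w0 \<noteq> 1" using ne pp[OF ne(1)] by (auto simp: divide_eq_1_iff)
    then have "ln (q w0 / p w0) < q w0 / p w0 - 1" using pp[OF ne(1)] qp[OF ne(1)] by (intro ln_less_minus_one) simp_all
    then have "p w0 * ln (q w0 / p w0) < p w0 * (q w0 / p w0 - 1)" using pp[OF ne(1)] by (intro mult_strict_left_mono) auto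
    also have "\<dots> = q w0 - p w0" using pp[OF ne(1)] by (simp add: field_simps)
    finally show ?thesis .
  qed
  have "(\<Sum>w\<in>S. p w * ln (q w / p w)) < (\<Sum>w\<in>S. q w - p w)"
    by (rule sum_strict_mono_ex1[OF fin]) (use term_le term_lt ne in auto)
  also have "\<dots> = 0" using ps qs by (simp add: sum_subtractf)
  finally have neg: "(\<Sum>w\<in>S. p w * ln (q w / p w)) < 0" .
  have "(\<Sum>w\<in>S. p w * ln (p w / q w)) = - (\<Sum>w\<in>S. p w * ln (q w / p w))"
    unfolding sum_negf[symmetric] by (intro sum.cong refl) (simp add: pp qp ln_div algebra_simps)
  with neg show ?thesis by simp
qed

lemma marg_sum1:
  assumes sig_fin: "finite (Sig i)" and supp: "set_pmf (L \<theta>) \<subseteq> {s. \<forall>i. s i \<in> Sig i}"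
  shows "(\<Sum>w\<in>Sig i. marg L i \<theta> w) = 1"
  unfolding marg_def by (rule sum_pmf_eq_1[OF sig_fin]) (use supp in auto)

lemma expect_KL:
  assumes sig_fin: "finite (Sig i)" and supp: "set_pmf (L \<theta>s) \<subseteq> {s. \<forall>i. s i \<in> Sig i}"
  shows "measure_pmf.expectation (L \<theta>s) (\<lambda>s. ln (marg L i \<theta>s (s i) / marg L i \<theta> (s i)))
         = KLi Sig L i \<theta>s \<theta>"
proof -
  let ?g = "\<lambda>w. ln (marg L i \<theta>s w / marg L i \<theta> w)"
  have "measure_pmf.expectation (L \<theta>s) (\<lambda>s. ?g (s i))
        = measure_pmf.expectation (map_pmf (\<lambda>s. s i) (L \<theta>s)) ?g"
    by simp
  also have "\<dots> = (\<Sum>w\<in>Sig i. pmf (map_pmf (\<lambda>s. s i) (L \<theta>s)) w *\<^sub>R ?g w)"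
    by (rule integral_measure_pmf[OF sig_fin]) (use supp in auto)
  also have "\<dots> = KLi Sig L i \<theta>s \<theta>" unfolding KLi_def marg_def by simp
  finally show ?thesis .
qed

lemma AE_supp:
  "AE \<omega> in pathM L \<theta>s. \<forall>t. \<omega> t \<in> set_pmf (L \<theta>s)"
  unfolding pathM_def AE_all_countable
proof
  fix t
  show "AE x in Pi\<^sub>M UNIV (\<lambda>_. measure_pmf (L \<theta>s)). x t \<in> set_pmf (L \<theta>s)"
    by (rule AE_PiM_component[where P="\<lambda>x. x \<in> set_pmf (L \<theta>s)"])
       (auto simp: measure_pmf.prob_space_axioms AE_measure_pmf)
qed

lemma AE_sum_bound:
  fixes L :: "'h \<Rightarrow> ('v \<Rightarrow> 's) pmf"
  assumes sig_fin: "finite (Sig i)"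
    and supp: "\<And>\<theta>. set_pmf (L \<theta>) \<subseteq> {s. \<forall>i. s i \<in> Sig i}"
    and marg_pos: "\<And>\<theta> w. w \<in> Sig i \<Longrightarrow> marg L i \<theta> w > 0"
  shows "AE \<omega> in pathM L \<theta>s. \<exists>C. \<forall>t. C \<le> (\<Sum>s<t. ln (marg L i \<theta>s (\<omega> s i) / marg L i \<theta> (\<omega> s i)))"
proof -
  let ?g = "\<lambda>w. ln (marg L i \<theta>s w / marg L i \<theta> w)"
  show ?thesis
  proof (cases "\<forall>w\<in>Sig i. marg L i \<theta>s w = marg L i \<theta> w")
    case True
    show ?thesis using AE_supp[of L \<theta>s]
    proof eventually_elim
      case (elim \<omega>)
      have "\<omega> s i \<in> Sig i" for s using elim supp[of \<theta>s] by auto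
      then have "?g (\<omega> s i) = 0" for s using True marg_pos[of "\<omega> s i" \<theta>] by simp
      then show ?case by (intro exI[of _ 0]) simp
    qed
  next
    case False
    then obtain w0 where w0: "w0 \<in> Sig i" "marg L i \<theta>s w0 \<noteq> marg L i \<theta> w0" by blast
    have KL: "KLi Sig L i \<theta>s \<theta> > 0" unfolding KLi_def
      by (rule gibbs_strict[OF sig_fin _ _ marg_sum1[of Sig i L \<theta>s, OF sig_fin supp] marg_sum1[of Sig i L \<theta>, OF sig_fin supp] w0])
         (auto intro: marg_pos)
    define B where "B = (\<Sum>w\<in>Sig i. \<bar>?g w\<bar>)"
    have bnd: "\<bar>?g (x i)\<bar> \<le> B" if "x \<in> set_pmf (L \<theta>s)" for x
    proof -
      have "x i \<in> Sig i" using that supp[of \<theta>s] by auto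
      then show ?thesis unfolding B_def by (intro member_le_sum) (auto simp: sig_fin)
    qed
    have "AE \<omega> in PiM (UNIV::nat set) (\<lambda>_. measure_pmf (L \<theta>s)). \<exists>C. \<forall>t. C \<le> (\<Sum>s<t. ?g (\<omega> s i))"
      using bnd KL expect_KL[of Sig i L \<theta>s, OF sig_fin supp]
      by (intro sum_bounded_below[where f = "\<lambda>x. ?g (x i)" and p = "L \<theta>s" and B = B]) auto
    then show ?thesis unfolding pathM_def .
  qed
qed

theorem lemma2:
  fixes a :: nat
    and E :: "('v::finite \<times> 'v) set"
    and Sig :: "'v \<Rightarrow> 's set"
    and L :: "'h::finite \<Rightarrow> ('v \<Rightarrow> 's) pmf"
    and \<theta>s :: 'h
    and pi0 mu0 :: "'v \<Rightarrow> 'h \<Rightarrow> real"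
  assumes a2: "a \<ge> 2"
    and sig_fin: "\<And>i. finite (Sig i)"
    and supp: "\<And>\<theta>. set_pmf (L \<theta>) \<subseteq> {s. \<forall>i. s i \<in> Sig i}"
    and marg_pos: "\<And>i \<theta> w. w \<in> Sig i \<Longrightarrow> marg L i \<theta> w > 0"
    and ident: "\<And>p q. p \<noteq> q \<Longrightarrow> \<exists>i. KLi Sig L i p q > 0"
    and strong: "\<And>i j. (i, j) \<in> E\<^sup>*"
    and pi0_pos: "\<And>i \<theta>. pi0 i \<theta> > 0"
    and mu0_pos: "\<And>i \<theta>. mu0 i \<theta> > 0"
    and pi0_sum: "\<And>i. (\<Sum>\<theta>\<in>UNIV. pi0 i \<theta>) = 1"
    and mu0_sum: "\<And>i. (\<Sum>\<theta>\<in>UNIV. mu0 i \<theta>) = 1"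
  shows "\<exists>\<Omega>b \<in> sets (pathM L \<theta>s). emeasure (pathM L \<theta>s) \<Omega>b = 1 \<and>
           (\<forall>\<omega>\<in>\<Omega>b. \<exists>\<eta>::real. 0 < \<eta> \<and> \<eta> < 1 \<and> (\<exists>t'::real. 0 < t' \<and>
              (\<forall>t::nat. real t \<ge> t' \<longrightarrow> (\<forall>i. pib L pi0 \<omega> t i \<theta>s \<ge> \<eta> \<and>
                                                   mub a E L pi0 mu0 \<omega> t i \<theta>s \<ge> \<eta>))))"
proof -
  let ?PM = "pathM L \<theta>s"
  interpret PS: prob_space ?PM unfolding pathM_def
    by (intro prob_space_PiM) (simp add: measure_pmf.prob_space_axioms)
  define good :: "(nat \<Rightarrow> 'v \<Rightarrow> 's) \<Rightarrow> bool" where "good \<omega> \<longleftrightarrow> (\<forall>t. \<omega> t \<in> set_pmf (L \<theta>s)) \<and>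
     (\<forall>i \<theta>. \<exists>C. \<forall>t. C \<le> (\<Sum>s<t. ln (marg L i \<theta>s (\<omega> s i) / marg L i \<theta> (\<omega> s i))))" for \<omega>
  have AEg: "AE \<omega> in ?PM. good \<omega>"
  proof -
    have "AE \<omega> in ?PM. \<forall>i \<theta>. \<exists>C. \<forall>t. C \<le> (\<Sum>s<t. ln (marg L i \<theta>s (\<omega> s i) / marg L i \<theta> (\<omega> s i)))"
      by (intro eventually_all_finite AE_sum_bound marg_pos) (simp_all add: sig_fin supp)
    with AE_supp[of L \<theta>s] show ?thesis unfolding good_def by eventually_elim auto
  qed
  have concl: "\<exists>\<eta>::real. 0 < \<eta> \<and> \<eta> < 1 \<and> (\<exists>t'::real. 0 < t' \<and>
              (\<forall>t::nat. real t \<ge> t' \<longrightarrow> (\<forall>i. pib L pi0 \<omega> t i \<theta>s \<ge> \<eta> \<and>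
                                                   mub a E L pi0 mu0 \<omega> t i \<theta>s \<ge> \<eta>)))"
    if g: "good \<omega>" for \<omega>
  proof -
    have mpos: "marg L i \<theta> (\<omega> t i) > 0" for i \<theta> t
    proof -
      have "\<omega> t \<in> set_pmf (L \<theta>s)" using g unfolding good_def by blast
      then have "\<omega> t i \<in> Sig i" using supp[of \<theta>s] by auto
      then show ?thesis by (rule marg_pos)
    qed
    have "\<forall>i. \<exists>e>0. \<forall>t. e \<le> pib L pi0 \<omega> t i \<theta>s"
    proof
      fix i
      show "\<exists>e>0. \<forall>t. e \<le> pib L pi0 \<omega> t i \<theta>s"
        by (rule pib_lower[of L i \<omega> pi0, OF mpos pi0_pos pi0_sum])
           (use g in \<open>auto simp: good_def\<close>)
    qed
    then obtain ef where ef: "\<And>i. ef i > 0" "\<And>i t. ef i \<le> pib L pi0 \<omega> t i \<theta>s" by metis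
    define e where "e = min (Min (range ef)) (Min (range (\<lambda>i. mu0 i \<theta>s)))"
    have epos: "e > 0" unfolding e_def using ef(1) mu0_pos by (auto simp: Min_gr_iff)
    have plow: "e \<le> pib L pi0 \<omega> t i \<theta>s" for t i
    proof -
      have "e \<le> ef i" unfolding e_def by (intro min.coboundedI1 Min_le) auto
      then show ?thesis using ef(2)[of i t] by linarith
    qed
    have m0low: "e \<le> mu0 i \<theta>s" for i
      unfolding e_def by (intro min.coboundedI2 Min_le) auto
    have ml: "(\<forall>i \<theta>. mub a E L pi0 mu0 \<omega> t i \<theta> > 0) \<and> (\<forall>i. e \<le> mub a E L pi0 mu0 \<omega> t i \<theta>s)" for t
    proof (rule mub_lower)
      show "pib L pi0 \<omega> t i \<theta> > 0" for t i \<theta> by (rule pib_pos) (rule mpos, rule pi0_pos)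
      show "(\<Sum>\<theta>\<in>UNIV. pib L pi0 \<omega> t i \<theta>) = 1" for t i by (rule pib_sum) (rule mpos, rule pi0_pos, rule pi0_sum)
      show "e \<le> pib L pi0 \<omega> t i \<theta>s" for t i by (rule plow)
      show "mu0 i \<theta> > 0" for i \<theta> by (rule mu0_pos)
      show "e \<le> mu0 i \<theta>s" for i by (rule m0low)
    qed
    show ?thesis
    proof -
      have A: "min e (1/2) \<le> pib L pi0 \<omega> t i \<theta>s" for t i using plow[of t i] by linarith
      have B: "min e (1/2) \<le> mub a E L pi0 mu0 \<omega> t i \<theta>s" for t i
      proof -
        have "e \<le> mub a E L pi0 mu0 \<omega> t i \<theta>s" using ml[of t] by blast
        then show ?thesis by linarith
      qed
      have C: "0 < min e (1/2)" "min e (1/2) < (1::real)" using epos by auto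
      show ?thesis using A B C by (intro exI[of _ "min e (1/2)"] conjI exI[of _ "1::real"]) auto
    qed
  qed
  from AEg obtain N where N: "{x \<in> space ?PM. \<not> good x} \<subseteq> N" "emeasure ?PM N = 0" "N \<in> sets ?PM"
    by (rule AE_E)
  show ?thesis
  proof (intro bexI[of _ "space ?PM - N"] conjI ballI)
    show "space ?PM - N \<in> sets ?PM" using N(3) by auto
    have "emeasure ?PM (space ?PM - N) = emeasure ?PM (space ?PM) - emeasure ?PM N"
      using N(2,3) by (intro emeasure_Diff) (auto dest: sets.sets_into_space)
    then show "emeasure ?PM (space ?PM - N) = 1" using N(2) PS.emeasure_space_1 by simp
    fix \<omega> assume "\<omega> \<in> space ?PM - N"
    then have "good \<omega>" using N(1) by auto
    then show "\<exists>\<eta>::real. 0 < \<eta> \<and> \<eta> < 1 \<and> (\<exists>t'::real. 0 < t' \<and>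
              (\<forall>t::nat. real t \<ge> t' \<longrightarrow> (\<forall>i. pib L pi0 \<omega> t i \<theta>s \<ge> \<eta> \<and>
                                                   mub a E L pi0 mu0 \<omega> t i \<theta>s \<ge> \<eta>)))"
      by (rule concl)
  qed
qed

end
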